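(* Let $n\ge 6$ and let $G$ be a tree on $n$ vertices. Suppose $G\not\cong P_n$ and the degree sequence of $G$ is not $(3,2,\ldots,2,1,1,1)$ (one vertex of degree $3$, $n-4$ of degree $2$, three of degree $1$). Then $\mathrm{irr}_t(G)\ge 6n-20$. Equality holds if and only if the degree sequence of $G$ is $(3,3,2,\ldots,2,1,1,1,1)$, i.e. exactly two vertices of degree $3$, $n-6$ vertices of degree $2$ and $4$ vertices of degree $1$.
   Context: For a graph $G=(V,E)$ and $w\in V$, $d_G(w)$ is the degree of $w$. The total irregularity is $\mathrm{irr}_t(G)=\frac12\sum_{x,y\in V}|d_G(x)-d_G(y)|$, where the sum runs over all ordered pairs of vertices. $P_n$ is the path on $n$ vertices. Degree sequences are listed in nonincreasing order. *)

theory Defs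
  imports Complex_Main "HOL-Library.Multiset"
begin

definition simple_graph :: "'a set \<Rightarrow> 'a set set \<Rightarrow> bool" where
  "simple_graph V E \<longleftrightarrow> finite V \<and>
     (\<forall>e\<in>E. \<exists>u v. u \<noteq> v \<and> e = {u, v} \<and> u \<in> V \<and> v \<in> V)"

definition adj :: "'a set set \<Rightarrow> 'a \<Rightarrow> 'a \<Rightarrow> bool" where
  "adj E u v \<longleftrightarrow> {u, v} \<in> E"

definition degree :: "'a set set \<Rightarrow> 'a \<Rightarrow> nat" where
  "degree E v = card {e \<in> E. v \<in> e}"

definition is_walk :: "'a set \<Rightarrow> 'a set set \<Rightarrow> 'a list \<Rightarrow> bool" where
  "is_walk V E p \<longleftrightarrow> p \<noteq> [] \<and> set p \<subseteq> V \<and>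
     (\<forall>i. Suc i < length p \<longrightarrow> adj E (p ! i) (p ! Suc i))"

definition connected_graph :: "'a set \<Rightarrow> 'a set set \<Rightarrow> bool" where
  "connected_graph V E \<longleftrightarrow>
     (\<forall>u\<in>V. \<forall>v\<in>V. \<exists>p. is_walk V E p \<and> hd p = u \<and> last p = v)"

definition is_cycle :: "'a set \<Rightarrow> 'a set set \<Rightarrow> 'a list \<Rightarrow> bool" where
  "is_cycle V E c \<longleftrightarrow> is_walk V E c \<and> length c \<ge> 3 \<and> distinct c \<and>
     adj E (last c) (hd c)"

definition acyclic_graph :: "'a set \<Rightarrow> 'a set set \<Rightarrow> bool" where
  "acyclic_graph V E \<longleftrightarrow> (\<nexists>c. is_cycle V E c)"

definition is_tree :: "'a set \<Rightarrow> 'a set set \<Rightarrow> bool" where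
  "is_tree V E \<longleftrightarrow> simple_graph V E \<and> V \<noteq> {} \<and> connected_graph V E \<and> acyclic_graph V E"

definition path_edges :: "nat \<Rightarrow> nat set set" where
  "path_edges n = {{i, Suc i} | i. Suc i < n}"

definition isomorphic_to_path :: "'a set \<Rightarrow> 'a set set \<Rightarrow> nat \<Rightarrow> bool" where
  "isomorphic_to_path V E n \<longleftrightarrow>
     (\<exists>f. bij_betw f V {0..<n} \<and>
          (\<forall>u\<in>V. \<forall>v\<in>V. {u, v} \<in> E \<longleftrightarrow> {f u, f v} \<in> path_edges n))"

text \<open>Degree sequence, as a multiset (a nonincreasing list is determined by it).\<close>
definition degree_seq :: "'a set \<Rightarrow> 'a set set \<Rightarrow> nat multiset" where
  "degree_seq V E = image_mset (degree E) (mset_set V)"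

definition irr_t :: "'a set \<Rightarrow> 'a set set \<Rightarrow> real" where
  "irr_t V E = (1/2) * (\<Sum>x\<in>V. \<Sum>y\<in>V. \<bar>real (degree E x) - real (degree E y)\<bar>)"

end

theory Submission
  imports Defs
begin


lemma arith_main:
  fixes l k m S n :: int
  assumes "n = l + k + m" "l + 2*k + S + 2 = 2*n" "S \<ge> 3*m" "m \<ge> 1" "\<not>(m = 1 \<and> S = 3)"
    "n \<ge> 6" "l \<ge> 0" "k \<ge> 0"
  shows "l*k + l*(S-m) + k*(S-2*m) \<ge> 6*n-20 \<and>
         (l*k + l*(S-m) + k*(S-2*m) \<le> 6*n-20 \<longrightarrow> m = 2 \<and> S = 6)"
proof -
  define R where "R = S - 3*m"
  have R: "R \<ge> 0" "S = 3*m + R" using assms R_def by auto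
  have l: "l = m + R + 2" using assms R by linarith
  show ?thesis
  proof (cases "m = 1")
    case True
    then have "R \<ge> 1" using assms R by auto
    have e: "l*k + l*(S-m) + k*(S-2*m) - (6*n-20) = 2*k*(R-1) + R*(R-1) + 2"
    proof -
      have "l = R + 3" "S = R + 3" "n = R + k + 4" "m = 1" using True l R assms by auto
      then show ?thesis by algebra
    qed
    have "2*k*(R-1) \<ge> 0" "R*(R-1) \<ge> 0" using \<open>R \<ge> 1\<close> assms by auto
    then show ?thesis using e True by linarith
  next
    case False
    define a where "a = m - 2"
    have a: "a \<ge> 0" "m = a + 2" using False assms a_def by auto
    have e: "l*k + l*(S-m) + k*(S-2*m) - (6*n-20) = 2*R + 2*a*k + 2*a*a + 2*R*k + 3*a*R + R*R"
    proof -
      have "l = a + R + 4" "S = 3*a + 6 + R" "n = a + R + k + 6 + a" "m = a + 2" using a l R assms by auto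
      then show ?thesis by algebra
    qed
    have "2*a*k \<ge> 0" "2*a*a \<ge> 0" "2*R*k \<ge> 0" "3*a*R \<ge> 0" "R*R \<ge> 0" using a R assms by auto
    moreover have aa: "a = 0 \<or> a*a > 0" using a by (auto simp add: zero_less_mult_iff)
    ultimately have ge: "l*k + l*(S-m) + k*(S-2*m) - (6*n-20) \<ge> 0" and
      eq: "l*k + l*(S-m) + k*(S-2*m) - (6*n-20) \<le> 0 \<Longrightarrow> R = 0 \<and> a = 0"
      using e a R by linarith+
    have "l*k + l*(S-m) + k*(S-2*m) \<le> 6*n-20 \<Longrightarrow> m = 2 \<and> S = 6"
    proof -
      assume "l*k + l*(S-m) + k*(S-2*m) \<le> 6*n-20"
      then have "R = 0 \<and> a = 0" using eq by linarith
      then show "m = 2 \<and> S = 6" using a R by auto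
    qed
    then show ?thesis using ge by linarith
  qed
qed



lemma walk_succ: "is_walk V E p \<longleftrightarrow> p \<noteq> [] \<and> set p \<subseteq> V \<and> successively (adj E) p"
  unfolding is_walk_def successively_conv_nth by blast

lemma adj_sym: "adj E u v \<longleftrightarrow> adj E v u"
  by (simp add: adj_def insert_commute)

lemma sg_edge: "simple_graph V E \<Longrightarrow> e \<in> E \<Longrightarrow> \<exists>x y. x \<noteq> y \<and> e = {x,y} \<and> x \<in> V \<and> y \<in> V"
  unfolding simple_graph_def by (elim conjE) (drule bspec)
lemma sg_adj: "simple_graph V E \<Longrightarrow> adj E u v \<Longrightarrow> u \<noteq> v \<and> u \<in> V \<and> v \<in> V"
proof -
  assume s: "simple_graph V E" and a: "adj E u v"
  then obtain x y where xy: "x \<noteq> y" "{u,v} = {x,y}" "x \<in> V" "y \<in> V"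
    using sg_edge[OF s, of "{u,v}"] unfolding adj_def by auto
  then show ?thesis by (metis doubleton_eq_iff)
qed

lemma sg_finE: "simple_graph V E \<Longrightarrow> finite E"
proof -
  assume s: "simple_graph V E"
  have "E \<subseteq> Pow V"
  proof
    fix e assume "e \<in> E" then show "e \<in> Pow V" using sg_edge[OF s] by fastforce
  qed
  moreover have "finite V" using s simple_graph_def by blast
  ultimately show ?thesis by (meson finite_Pow_iff finite_subset)
qed
lemma sg_finV: "simple_graph V E \<Longrightarrow> finite V" by (simp add: simple_graph_def)
lemma tree_sg: "is_tree V E \<Longrightarrow> simple_graph V E" by (simp add: is_tree_def)
lemma tree_ne: "is_tree V E \<Longrightarrow> V \<noteq> {}" by (simp add: is_tree_def)
lemma tree_conn: "is_tree V E \<Longrightarrow> u \<in> V \<Longrightarrow> v \<in> V \<Longrightarrow> \<exists>p. is_walk V E p \<and> hd p = u \<and> last p = v"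
  by (simp add: is_tree_def connected_graph_def)
lemma tree_acyc: "is_tree V E \<Longrightarrow> \<not> is_cycle V E c" by (simp add: is_tree_def acyclic_graph_def)
lemma walk_ne: "is_walk V E p \<Longrightarrow> p \<noteq> []" by (simp add: is_walk_def)
lemma walk_set: "is_walk V E p \<Longrightarrow> set p \<subseteq> V" by (simp add: is_walk_def)
lemma walk_adj: "is_walk V E p \<Longrightarrow> Suc i < length p \<Longrightarrow> adj E (p!i) (p!Suc i)" by (simp add: is_walk_def)

lemma handshake:
  assumes "simple_graph V E"
  shows "(\<Sum>v\<in>V. degree E v) = 2 * card E"
proof -
  have fV: "finite V" using assms sg_finV by blast
  have fE: "finite E" using assms sg_finE by blast
  have "(\<Sum>v\<in>V. degree E v) = (\<Sum>v\<in>V. \<Sum>e\<in>E. if v \<in> e then 1 else 0)"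
    unfolding degree_def by (rule sum.cong) (simp_all add: sum.If_cases fE Int_def)
  also have "\<dots> = (\<Sum>e\<in>E. \<Sum>v\<in>V. if v \<in> e then 1 else 0)" by (rule sum.swap)
  also have "\<dots> = (\<Sum>e\<in>E. 2)"
  proof (rule sum.cong)
    fix e assume "e \<in> E"
    then obtain a b where ab: "a \<noteq> b" "e = {a,b}" "a \<in> V" "b \<in> V" using sg_edge[OF assms] by blast
    have "(\<Sum>v\<in>V. if v \<in> e then 1 else 0) = card (V \<inter> e)" by (simp add: sum.If_cases fV)
    also have "V \<inter> e = {a,b}" using ab by auto
    finally show "(\<Sum>v\<in>V. if v \<in> e then 1 else 0) = (2::nat)" using ab by simp
  qed simp
  finally show ?thesis by simp
qed

lemma conn_nbr:
  assumes "connected_graph V E" "v \<in> V" "u \<in> V" "u \<noteq> v"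
  shows "\<exists>w. adj E v w"
proof -
  obtain p where p: "is_walk V E p" "hd p = v" "last p = u" using assms unfolding connected_graph_def by meson
  have "length p \<ge> 2"
  proof (rule ccontr)
    assume "\<not> length p \<ge> 2"
    moreover have "p \<noteq> []" using p walk_ne by blast
    moreover have "length p \<noteq> 0" using \<open>p \<noteq> []\<close> by simp
    ultimately have "length p = 1" by linarith
    then have "hd p = last p" by (cases p) auto
    then show False using p assms by simp
  qed
  then have "adj E (p!0) (p!Suc 0)" using walk_adj[OF p(1), of 0] by simp
  moreover have "p!0 = v" using p walk_ne[OF p(1)] by (simp add: hd_conv_nth)
  ultimately show ?thesis by blast
qed

context
  fixes V :: "'a set" and E :: "'a set set"
  assumes tree: "is_tree V E"
begin

lemma sg: "simple_graph V E" using tree tree_sg by blast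
lemma fV: "finite V" using sg sg_finV by blast
lemma fE: "finite E" using sg sg_finE by blast

lemma no_chord:
  assumes "is_walk V E p" "distinct p" "Suc i < j" "j < length p"
  shows "\<not> adj E (p!i) (p!j)"
proof
  assume a: "adj E (p!i) (p!j)"
  define c where "c = take (Suc j - i) (drop i p)"
  have lc: "length c = Suc j - i" using assms c_def by auto
  have cn: "\<And>t. t < Suc j - i \<Longrightarrow> c!t = p!(i+t)" using assms c_def by auto
  have "is_walk V E c"
    unfolding is_walk_def
  proof (intro conjI allI impI)
    show "c \<noteq> []" using lc assms by auto
    show "set c \<subseteq> V" using walk_set[OF assms(1)] c_def by (meson order_trans set_drop_subset set_take_subset)
    fix t assume "Suc t < length c"
    then show "adj E (c!t) (c!Suc t)" using cn lc walk_adj[OF assms(1), of "i+t"] assms by auto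
  qed
  moreover have "distinct c" using assms c_def by simp
  moreover have "length c \<ge> 3" using lc assms by simp
  moreover have cne: "c \<noteq> []" using lc assms by auto
  moreover have "hd c = p!i" using cn[of 0] lc assms cne by (simp add: hd_conv_nth)
  moreover have "last c = p!j" using cn[of "j - i"] lc assms cne by (simp add: last_conv_nth)
  ultimately have "is_cycle V E c" using a adj_sym unfolding is_cycle_def by metis
  then show False using tree tree_acyc by blast
qed

definition lp :: "'a list \<Rightarrow> bool" where
  "lp p \<longleftrightarrow> is_walk V E p \<and> distinct p \<and> (\<forall>q. is_walk V E q \<and> distinct q \<longrightarrow> length q \<le> length p)"

lemma lp_ex: "\<exists>p. lp p"
proof -
  obtain x where "x \<in> V" using tree tree_ne by blast
  then have b1: "is_walk V E [x] \<and> distinct [x]" by (simp add: is_walk_def)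
  have b2: "\<forall>q. is_walk V E q \<and> distinct q \<longrightarrow> length q < card V + 1"
  proof (intro allI impI)
    fix q assume q: "is_walk V E q \<and> distinct q"
    then have "length q = card (set q)" using distinct_card by (metis)
    moreover have "card (set q) \<le> card V" using q walk_set[of V E q] card_mono[OF fV] by blast
    ultimately show "length q < card V + 1" by simp
  qed
  from ex_has_greatest_nat[of "\<lambda>q. is_walk V E q \<and> distinct q" "[x]" length "card V + 1", OF b1 b2]
  obtain p where "is_walk V E p \<and> distinct p" "\<forall>q. is_walk V E q \<and> distinct q \<longrightarrow> length q \<le> length p"
    by blast
  then have "lp p" unfolding lp_def by simp
  then show ?thesis by blast
qed

lemma lp_hd: assumes "lp p" "adj E (hd p) w" shows "w \<in> set p"
proof (rule ccontr)
  assume "w \<notin> set p"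
  have p: "is_walk V E p" "distinct p" using assms lp_def by auto
  have "w \<in> V" using sg_adj[OF sg assms(2)] by blast
  have "is_walk V E (w # p)"
  proof -
    have "p \<noteq> []" "set p \<subseteq> V" "successively (adj E) p" using p(1) unfolding walk_succ by simp_all
    moreover have "adj E w (hd p)" using assms(2) adj_sym by metis
    ultimately show ?thesis using \<open>w \<in> V\<close> unfolding walk_succ successively_Cons by simp
  qed
  moreover have "distinct (w # p)" using p \<open>w \<notin> set p\<close> by simp
  ultimately have "length (w # p) \<le> length p" using assms lp_def by blast
  then show False by simp
qed

lemma lp_last: assumes "lp p" "adj E (last p) w" shows "w \<in> set p"
proof (rule ccontr)
  assume "w \<notin> set p"
  have p: "is_walk V E p" "distinct p" using assms lp_def by auto
  have "w \<in> V" using sg_adj[OF sg assms(2)] by blast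
  have "is_walk V E (p @ [w])"
  proof -
    have "p \<noteq> []" "set p \<subseteq> V" "successively (adj E) p" using p(1) unfolding walk_succ by simp_all
    then show ?thesis using \<open>w \<in> V\<close> assms(2) unfolding walk_succ successively_append_iff by simp
  qed
  moreover have "distinct (p @ [w])" using p \<open>w \<notin> set p\<close> by simp
  ultimately have "length (p @ [w]) \<le> length p" using assms lp_def by blast
  then show False by simp
qed

end



lemma tree_connected: "is_tree V E \<Longrightarrow> connected_graph V E" by (simp add: is_tree_def)

context
  fixes V :: "'a set" and E :: "'a set set"
  assumes tree: "is_tree V E"
begin

lemma lp_walk: "lp V E p \<Longrightarrow> is_walk V E p" by (simp add: lp_def[OF tree])
lemma lp_dist: "lp V E p \<Longrightarrow> distinct p" by (simp add: lp_def[OF tree])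

lemma leaf_ex:
  assumes "card V \<ge> 2"
  shows "\<exists>v u. v \<in> V \<and> u \<in> V \<and> u \<noteq> v \<and> {e\<in>E. v\<in>e} = {{v,u}}"
proof -
  obtain p where lpp: "lp V E p" using lp_ex[OF tree] by blast
  have p: "is_walk V E p" "distinct p" using lpp lp_walk lp_dist by auto
  have pne: "p \<noteq> []" using walk_ne[OF p(1)] .
  define v where "v = hd p"
  have vV: "v \<in> V" using v_def pne walk_set[OF p(1)] hd_in_set by blast
  have "\<exists>y\<in>V. y \<noteq> v"
  proof (rule ccontr)
    assume "\<not> (\<exists>y\<in>V. y \<noteq> v)"
    then have "V = {v}" using vV by blast
    then show False using assms by simp
  qed
  then obtain y where y: "y \<in> V" "y \<noteq> v" by blast
  obtain w where vw: "adj E v w" using conn_nbr[OF tree_connected[OF tree] vV y(1) y(2)] by blast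
  have wp: "w \<in> set p" using lp_hd[OF tree lpp] vw v_def by blast
  have wv: "w \<noteq> v" using sg_adj[OF sg[OF tree] vw] by blast
  have lp2: "length p \<ge> 2"
  proof (rule ccontr)
    assume "\<not> length p \<ge> 2"
    moreover have "length p \<noteq> 0" using pne by simp
    ultimately have "length p = 1" by linarith
    then have "p = [v]" using v_def by (cases p) auto
    then show False using wp wv by simp
  qed
  have p0: "p!0 = v" using v_def pne by (simp add: hd_conv_nth)
  define u where "u = p!1"
  have vu: "adj E v u" using walk_adj[OF p(1), of 0] lp2 p0 u_def by simp
  have uv: "u \<noteq> v" using sg_adj[OF sg[OF tree] vu] by blast
  have "{e\<in>E. v\<in>e} = {{v,u}}"
  proof
    show "{{v,u}} \<subseteq> {e\<in>E. v\<in>e}" using vu adj_def by fastforce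
    show "{e\<in>E. v\<in>e} \<subseteq> {{v,u}}"
    proof
      fix e assume e: "e \<in> {e\<in>E. v\<in>e}"
      then obtain a b where ab: "a \<noteq> b" "e = {a,b}" using sg_edge[OF sg[OF tree]] by blast
      define z where "z = (if a = v then b else a)"
      have ez: "e = {v,z}" "z \<noteq> v" using ab e z_def by auto
      then have vz: "adj E v z" using e unfolding adj_def by auto
      have "z \<in> set p" using lp_hd[OF tree lpp] vz v_def by blast
      then obtain j where j: "j < length p" "p!j = z" by (meson in_set_conv_nth)
      have "j \<noteq> 0" using j ez p0 by (metis)
      moreover have "\<not> Suc 0 < j"
      proof
        assume "Suc 0 < j"
        then have "\<not> adj E (p!0) (p!j)" using no_chord[OF tree p(1) p(2)] j by blast
        then show False using vz p0 j by simp
      qed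
      ultimately have "j = 1" by linarith
      then show "e \<in> {{v,u}}" using ez j u_def by simp
    qed
  qed
  then show ?thesis using vV uv u_def walk_set[OF p(1)] lp2 by (metis One_nat_def Suc_1 Suc_le_lessD nth_mem subset_iff)
qed

end


lemma pe_iff: "{i,j} \<in> path_edges n \<longleftrightarrow> (\<exists>k. Suc k < n \<and> ((i = k \<and> j = Suc k) \<or> (i = Suc k \<and> j = k)))"
  unfolding path_edges_def by (auto simp: doubleton_eq_iff)

context
  fixes V :: "'a set" and E :: "'a set set"
  assumes tree: "is_tree V E"
begin

lemma path_iso:
  assumes deg: "\<forall>v\<in>V. degree E v \<le> 2" and cV: "card V = n"
  shows "isomorphic_to_path V E n"
proof -
  obtain p where lpp: "lp V E p" using lp_ex[OF tree] by blast
  have p: "is_walk V E p" "distinct p" using lpp lp_walk[OF tree] lp_dist[OF tree] by auto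
  have pne: "p \<noteq> []" using walk_ne[OF p(1)] .
  have cl: "w \<in> set p" if i: "i < length p" and a: "adj E (p!i) w" for i w
  proof (rule ccontr)
    assume wn: "w \<notin> set p"
    consider "i = 0" | "i = length p - 1" | "0 < i \<and> i + 1 < length p" using i by linarith
    then show False
    proof cases
      case 1
      then have "hd p = p!i" using pne by (simp add: hd_conv_nth)
      then show False using lp_hd[OF tree lpp, of w] a wn by simp
    next
      case 2
      then have "last p = p!i" using pne by (simp add: last_conv_nth)
      then show False using lp_last[OF tree lpp, of w] a wn by simp
    next
      case 3
      define x where "x = p!i"
      define aa where "aa = p!(i-1)"
      define bb where "bb = p!(i+1)"
      have si: "Suc (i-1) = i" using 3 by simp
      have "adj E aa x" using walk_adj[OF p(1), of "i-1"] 3 x_def aa_def si by simp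
      then have xa: "adj E x aa" by (rule adj_sym[THEN iffD1])
      have xb: "adj E x bb" using walk_adj[OF p(1), of i] 3 x_def bb_def by simp
      have il: "i-1 < length p" "i+1 < length p" "i < length p" using 3 by linarith+
      have d1: "aa \<noteq> bb" "aa \<noteq> x" "bb \<noteq> x"
        unfolding x_def aa_def bb_def
        using nth_eq_iff_index_eq[OF p(2) il(1) il(2)] nth_eq_iff_index_eq[OF p(2) il(1) il(3)]
          nth_eq_iff_index_eq[OF p(2) il(2) il(3)] 3 by auto
      have d2: "w \<noteq> aa" "w \<noteq> bb" "w \<noteq> x" using wn 3 x_def aa_def bb_def i by (auto)
      have sub: "{{x,aa},{x,bb},{x,w}} \<subseteq> {e\<in>E. x\<in>e}" using xa xb a x_def unfolding adj_def by auto
      have c3: "card {{x,aa},{x,bb},{x,w}} = 3" using d1 d2 by (simp add: doubleton_eq_iff)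
      have "card {{x,aa},{x,bb},{x,w}} \<le> card {e\<in>E. x\<in>e}"
        using sub fE[OF tree] by (simp add: card_mono)
      moreover have "x \<in> V" using x_def i walk_set[OF p(1)] by auto
      ultimately have "degree E x \<ge> 3" using c3 unfolding degree_def by simp
      moreover have "degree E x \<le> 2" using deg \<open>x \<in> V\<close> by blast
      ultimately show False by linarith
    qed
  qed
  have sp: "set p = V"
  proof
    show "set p \<subseteq> V" using walk_set[OF p(1)] .
    show "V \<subseteq> set p"
    proof
      fix v assume v: "v \<in> V"
      have "hd p \<in> V" using pne walk_set[OF p(1)] by auto
      then obtain q where q: "is_walk V E q" "hd q = hd p" "last q = v" using tree_conn[OF tree _ v] by blast
      have qne: "q \<noteq> []" using walk_ne[OF q(1)] .
      have "t < length q \<longrightarrow> q!t \<in> set p" for t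
      proof (induction t)
        case 0
        then show ?case using q(2) qne pne by (simp add: hd_conv_nth[symmetric])
      next
        case (Suc t)
        show ?case
        proof
          assume st: "Suc t < length q"
          then have "q!t \<in> set p" using Suc by simp
          then obtain i where i: "i < length p" "p!i = q!t" by (meson in_set_conv_nth)
          have "adj E (p!i) (q!Suc t)" using walk_adj[OF q(1) st] i by simp
          then show "q!Suc t \<in> set p" using cl i by blast
        qed
      qed
      then have "q!(length q - 1) \<in> set p" using qne by simp
      then show "v \<in> set p" using q(3) qne by (simp add: last_conv_nth)
    qed
  qed
  have lenp: "length p = n" using distinct_card[OF p(2)] sp cV by simp
  have bn: "bij_betw (nth p) {0..<n} V" using bij_betw_nth[OF p(2)] lenp sp by (simp add: atLeast0LessThan)
  define f where "f = inv_into {0..<n} (nth p)"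
  have bf: "bij_betw f V {0..<n}" using bij_betw_inv_into[OF bn] f_def by simp
  have key: "{p!i, p!j} \<in> E \<longleftrightarrow> {i,j} \<in> path_edges n" if ij: "i < n" "j < n" for i j
  proof -
    have "{p!i, p!j} \<in> E \<longleftrightarrow> adj E (p!i) (p!j)" by (simp add: adj_def)
    also have "\<dots> \<longleftrightarrow> (j = Suc i \<or> i = Suc j)"
    proof
      assume a: "adj E (p!i) (p!j)"
      show "j = Suc i \<or> i = Suc j"
      proof (rule ccontr)
        assume "\<not> (j = Suc i \<or> i = Suc j)"
        then consider "i = j" | "Suc i < j" | "Suc j < i" by linarith
        then show False
        proof cases
          case 1 then show False using sg_adj[OF sg[OF tree] a] by simp
        next
          case 2 then show False using no_chord[OF tree p(1) p(2) 2] a ij lenp by simp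
        next
          case 3 then show False using no_chord[OF tree p(1) p(2) 3] adj_sym[THEN iffD1, OF a] ij lenp by simp
        qed
      qed
    next
      assume "j = Suc i \<or> i = Suc j"
      then show "adj E (p!i) (p!j)"
      proof
        assume "j = Suc i" then show ?thesis using walk_adj[OF p(1), of i] ij lenp by simp
      next
        assume "i = Suc j"
        then have "adj E (p!j) (p!i)" using walk_adj[OF p(1), of j] ij lenp by simp
        then show ?thesis by (rule adj_sym[THEN iffD1])
      qed
    qed
    also have "\<dots> \<longleftrightarrow> {i,j} \<in> path_edges n" unfolding pe_iff using ij by auto
    finally show ?thesis .
  qed
  have "\<forall>u\<in>V. \<forall>v\<in>V. {u, v} \<in> E \<longleftrightarrow> {f u, f v} \<in> path_edges n"
  proof (intro ballI)
    fix u v assume uv: "u \<in> V" "v \<in> V"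
    have im: "nth p ` {0..<n} = V" using bij_betw_imp_surj_on[OF bn] .
    have fu: "f u < n" "p!(f u) = u"
      using bij_betw_apply[OF bf uv(1)] f_inv_into_f[of u "nth p" "{0..<n}"] uv(1) im f_def by auto
    have fv: "f v < n" "p!(f v) = v"
      using bij_betw_apply[OF bf uv(2)] f_inv_into_f[of v "nth p" "{0..<n}"] uv(2) im f_def by auto
    show "{u, v} \<in> E \<longleftrightarrow> {f u, f v} \<in> path_edges n" using key[OF fu(1) fv(1)] fu fv by simp
  qed
  then show ?thesis unfolding isomorphic_to_path_def using bf by blast
qed

end


lemma remove_walk:
  assumes sg: "simple_graph V E" and lv: "\<forall>e\<in>E. v \<in> e \<longrightarrow> e = {v,u}"
  shows "successively (adj E) q \<Longrightarrow> q \<noteq> [] \<Longrightarrow> hd q \<noteq> v \<Longrightarrow> last q \<noteq> v \<Longrightarrow>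
    \<exists>q'. q' \<noteq> [] \<and> set q' \<subseteq> set q - {v} \<and> successively (adj (E - {{v,u}})) q' \<and> hd q' = hd q \<and> last q' = last q"
proof (induction "length q" arbitrary: q rule: less_induct)
  case less
  have nb: "x = u" if "adj E x v" for x
  proof -
    have "x \<noteq> v" using sg_adj[OF sg that] by blast
    moreover have "{x,v} = {v,u}" using lv that unfolding adj_def by blast
    ultimately show ?thesis by (auto simp: doubleton_eq_iff)
  qed
  show ?case
  proof (cases "v \<in> set q")
    case False
    have "successively (adj (E - {{v,u}})) q"
    proof (rule successively_mono[OF less.prems(1)])
      fix x y assume "x \<in> set q" "y \<in> set q" "adj E x y"
      then have "{x,y} \<noteq> {v,u}" "{x,y} \<in> E" using False unfolding adj_def by (auto simp: doubleton_eq_iff)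
      then show "adj (E - {{v,u}}) x y" unfolding adj_def by simp
    qed
    then show ?thesis using less.prems False by blast
  next
    case True
    then obtain xs ys where q: "q = xs @ v # ys" by (meson split_list)
    have xs: "xs \<noteq> []" using q less.prems(3) by auto
    have ys: "ys \<noteq> []" using q less.prems(4) by auto
    have s1: "successively (adj E) xs" "successively (adj E) (v # ys)" "adj E (last xs) v"
      using less.prems(1) xs unfolding q successively_append_iff by auto
    have s2: "adj E v (hd ys)" "successively (adj E) ys" using s1(2) ys unfolding successively_Cons by auto
    have lx: "last xs = u" using nb s1(3) by blast
    have hy: "hd ys = u" using nb[OF adj_sym[THEN iffD1, OF s2(1)]] .
    obtain ys' where ys2: "ys = u # ys'" using ys hy by (cases ys) auto
    define q2 where "q2 = xs @ ys'"
    have s3: "successively (adj E) ys'" "ys' \<noteq> [] \<Longrightarrow> adj E u (hd ys')"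
      using s2(2) unfolding ys2 successively_Cons by auto
    have sq2: "successively (adj E) q2" unfolding q2_def successively_append_iff using s1(1) s3 lx by auto
    have hq2: "hd q2 = hd q" unfolding q2_def q using xs by simp
    have lq2: "last q2 = last q"
    proof (cases "ys' = []")
      case True
      then show ?thesis unfolding q2_def q ys2 using lx xs by simp
    next
      case False
      then show ?thesis unfolding q2_def q ys2 by simp
    qed
    have len: "length q2 < length q" unfolding q2_def q ys2 by simp
    have ne2: "q2 \<noteq> []" unfolding q2_def using xs by simp
    have "hd q2 \<noteq> v" "last q2 \<noteq> v" using hq2 lq2 less.prems(3,4) by simp_all
    then obtain q' where q': "q' \<noteq> []" "set q' \<subseteq> set q2 - {v}" "successively (adj (E - {{v,u}})) q'"
      "hd q' = hd q2" "last q' = last q2"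
      using less.hyps[OF len sq2 ne2] by blast
    have "set q2 \<subseteq> set q" unfolding q2_def q ys2 by auto
    then have "set q' \<subseteq> set q - {v}" using q'(2) by blast
    then show ?thesis using q' hq2 lq2 by (intro exI[of _ q']) simp
  qed
qed

lemma tree_remove:
  assumes tree: "is_tree V E" and v: "v \<in> V" and u: "u \<in> V" "u \<noteq> v"
    and lv: "{e\<in>E. v\<in>e} = {{v,u}}"
  shows "is_tree (V - {v}) (E - {{v,u}})"
proof -
  have sg: "simple_graph V E" using tree tree_sg by blast
  have lv': "\<forall>e\<in>E. v \<in> e \<longrightarrow> e = {v,u}" using lv by blast
  have "simple_graph (V - {v}) (E - {{v,u}})"
    unfolding simple_graph_def
  proof (intro conjI ballI)
    show "finite (V - {v})" using sg_finV[OF sg] by simp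
    fix e assume e: "e \<in> E - {{v,u}}"
    then obtain a b where ab: "a \<noteq> b" "e = {a,b}" "a \<in> V" "b \<in> V" using sg_edge[OF sg] by blast
    have "v \<notin> e" using e lv' by blast
    then show "\<exists>a b. a \<noteq> b \<and> e = {a, b} \<and> a \<in> V - {v} \<and> b \<in> V - {v}" using ab by blast
  qed
  moreover have "V - {v} \<noteq> {}" using u by blast
  moreover have "connected_graph (V - {v}) (E - {{v,u}})"
    unfolding connected_graph_def
  proof (intro ballI)
    fix x y assume x: "x \<in> V - {v}" and y: "y \<in> V - {v}"
    obtain q where q: "is_walk V E q" "hd q = x" "last q = y" using tree_conn[OF tree, of x y] x y by blast
    have "q \<noteq> []" "successively (adj E) q" "set q \<subseteq> V" using q(1) unfolding walk_succ by auto
    then obtain q' where q': "q' \<noteq> []" "set q' \<subseteq> set q - {v}" "successively (adj (E - {{v,u}})) q'"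
      "hd q' = x" "last q' = y"
      using remove_walk[OF sg lv', of q] q x y by auto
    have "is_walk (V - {v}) (E - {{v,u}}) q'" unfolding walk_succ using q' \<open>set q \<subseteq> V\<close> by blast
    then show "\<exists>p. is_walk (V - {v}) (E - {{v,u}}) p \<and> hd p = x \<and> last p = y" using q' by blast
  qed
  moreover have "acyclic_graph (V - {v}) (E - {{v,u}})"
    unfolding acyclic_graph_def
  proof
    assume "\<exists>c. is_cycle (V - {v}) (E - {{v,u}}) c"
    then obtain c where c: "is_cycle (V - {v}) (E - {{v,u}}) c" by blast
    have "is_cycle V E c" using c unfolding is_cycle_def is_walk_def adj_def by auto
    then show False using tree_acyc[OF tree] by blast
  qed
  ultimately show ?thesis unfolding is_tree_def by blast
qed

lemma tree_card: "is_tree V E \<Longrightarrow> card E = card V - 1"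
proof (induction "card V" arbitrary: V E rule: less_induct)
  case less
  have sg: "simple_graph V E" using less.prems tree_sg by blast
  have fV: "finite V" using sg_finV[OF sg] .
  have ne: "V \<noteq> {}" using less.prems tree_ne by blast
  show ?case
  proof (cases "card V \<ge> 2")
    case False
    moreover have "card V \<noteq> 0" using ne fV by simp
    ultimately have "card V = 1" by linarith
    then obtain x where Vx: "V = {x}" using card_1_singletonE by blast
    have "E = {}"
    proof (rule ccontr)
      assume "E \<noteq> {}"
      then obtain e where "e \<in> E" by blast
      then obtain a b where "a \<noteq> b" "a \<in> V" "b \<in> V" using sg_edge[OF sg] by blast
      then show False using Vx by blast
    qed
    then show ?thesis using \<open>card V = 1\<close> by simp
  next
    case True
    obtain v u where vu: "v \<in> V" "u \<in> V" "u \<noteq> v" "{e\<in>E. v\<in>e} = {{v,u}}"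
      using leaf_ex[OF less.prems True] by blast
    have t2: "is_tree (V - {v}) (E - {{v,u}})" using tree_remove[OF less.prems vu] .
    have c1: "card (V - {v}) = card V - 1" using vu fV by simp
    have "card (V - {v}) < card V" using c1 True by simp
    then have "card (E - {{v,u}}) = card (V - {v}) - 1" using less.hyps t2 by blast
    moreover have "{v,u} \<in> E" using vu(4) by blast
    moreover have "finite E" using sg_finE[OF sg] .
    ultimately have "card E - 1 = card V - 1 - 1" using c1 by simp
    moreover have "card E \<ge> 1" using \<open>{v,u} \<in> E\<close> \<open>finite E\<close> card_0_eq by fastforce
    ultimately show ?thesis using True by linarith
  qed
qed



lemma count_dseq:
  assumes "finite V"
  shows "count (degree_seq V E) k = card {v\<in>V. degree E v = k}"
proof -
  have "count (degree_seq V E) k = (\<Sum>x | x \<in># mset_set V \<and> k = degree E x. count (mset_set V) x)"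
    unfolding degree_seq_def by (rule count_image_mset')
  also have "\<dots> = (\<Sum>x | x \<in> V \<and> k = degree E x. 1)"
    using assms by (intro sum.cong) auto
  also have "\<dots> = card {v\<in>V. degree E v = k}" by (simp add: eq_commute)
  finally show ?thesis .
qed

lemma split3:
  fixes h :: "'a \<Rightarrow> real"
  assumes fV: "finite V" and dpos: "\<forall>v\<in>V. degree E v \<ge> 1"
  shows "(\<Sum>v\<in>V. h v) = (\<Sum>v\<in>{v\<in>V. degree E v = 1}. h v) + (\<Sum>v\<in>{v\<in>V. degree E v = 2}. h v)
          + (\<Sum>v\<in>{v\<in>V. 3 \<le> degree E v}. h v)"
proof -
  have V: "V = {v\<in>V. degree E v = 1} \<union> ({v\<in>V. degree E v = 2} \<union> {v\<in>V. 3 \<le> degree E v})"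
    using dpos by force
  have "(\<Sum>v\<in>V. h v) = (\<Sum>v\<in>{v\<in>V. degree E v = 1} \<union> ({v\<in>V. degree E v = 2} \<union> {v\<in>V. 3 \<le> degree E v}). h v)"
    using V by simp
  also have "\<dots> = (\<Sum>v\<in>{v\<in>V. degree E v = 1}. h v) + (\<Sum>v\<in>{v\<in>V. degree E v = 2} \<union> {v\<in>V. 3 \<le> degree E v}. h v)"
    by (rule sum.union_disjoint) (use fV in auto)
  also have "(\<Sum>v\<in>{v\<in>V. degree E v = 2} \<union> {v\<in>V. 3 \<le> degree E v}. h v) = (\<Sum>v\<in>{v\<in>V. degree E v = 2}. h v) + (\<Sum>v\<in>{v\<in>V. 3 \<le> degree E v}. h v)"
    by (rule sum.union_disjoint) (use fV in auto)
  finally show ?thesis by simp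
qed



lemma irr_formula:
  assumes fV: "finite V" and dpos: "\<forall>v\<in>V. degree E v \<ge> 1"
  defines "L \<equiv> {v\<in>V. degree E v = 1}" and "K \<equiv> {v\<in>V. degree E v = 2}" and "M \<equiv> {v\<in>V. 3 \<le> degree E v}"
  shows "2 * irr_t V E = 2 * (real (card L) * real (card K) + real (card L) * (real (\<Sum>v\<in>M. degree E v) - real (card M))
            + real (card K) * (real (\<Sum>v\<in>M. degree E v) - 2 * real (card M)))
          + (\<Sum>x\<in>M. \<Sum>y\<in>M. \<bar>real (degree E x) - real (degree E y)\<bar>)"
proof -
  define g where "g x y = \<bar>real (degree E x) - real (degree E y)\<bar>" for x y
  define l where "l = real (card L)"
  define k where "k = real (card K)"
  define m where "m = real (card M)"
  define S where "S = real (\<Sum>v\<in>M. degree E v)"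
  have fL: "finite L" "finite K" "finite M" using fV unfolding L_def K_def M_def by auto
  have sp: "(\<Sum>v\<in>V. h v) = (\<Sum>v\<in>L. h v) + (\<Sum>v\<in>K. h v) + (\<Sum>v\<in>M. h v)" for h :: "'a \<Rightarrow> real"
    unfolding L_def K_def M_def using split3[OF fV dpos] .
  have SM: "(\<Sum>y\<in>M. real (degree E y)) = S" unfolding S_def by simp
  have rowL: "(\<Sum>y\<in>V. g x y) = k + (S - m)" if x: "x \<in> L" for x
  proof -
    have dx: "degree E x = 1" using x L_def by simp
    have "(\<Sum>y\<in>L. g x y) = 0" using dx unfolding g_def L_def by simp
    moreover have "(\<Sum>y\<in>K. g x y) = (\<Sum>y\<in>K. 1)" using dx unfolding g_def K_def by (intro sum.cong) auto
    moreover have "(\<Sum>y\<in>M. g x y) = (\<Sum>y\<in>M. real (degree E y) - 1)" using dx unfolding g_def M_def by (intro sum.cong) auto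
    ultimately show ?thesis using sp[of "g x"] SM unfolding k_def m_def by (simp add: sum_subtractf)
  qed
  have rowK: "(\<Sum>y\<in>V. g x y) = l + (S - 2*m)" if x: "x \<in> K" for x
  proof -
    have dx: "degree E x = 2" using x K_def by simp
    have "(\<Sum>y\<in>K. g x y) = 0" using dx unfolding g_def K_def by simp
    moreover have "(\<Sum>y\<in>L. g x y) = (\<Sum>y\<in>L. 1)" using dx unfolding g_def L_def by (intro sum.cong) auto
    moreover have "(\<Sum>y\<in>M. g x y) = (\<Sum>y\<in>M. real (degree E y) - 2)" using dx unfolding g_def M_def by (intro sum.cong) auto
    ultimately show ?thesis using sp[of "g x"] SM unfolding l_def m_def by (simp add: sum_subtractf)
  qed
  have rowM: "(\<Sum>y\<in>V. g x y) = l * (real (degree E x) - 1) + k * (real (degree E x) - 2) + (\<Sum>y\<in>M. g x y)" if x: "x \<in> M" for x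
  proof -
    have dx: "degree E x \<ge> 3" using x M_def by simp
    have "(\<Sum>y\<in>L. g x y) = (\<Sum>y\<in>L. real (degree E x) - 1)" using dx unfolding g_def L_def by (intro sum.cong) auto
    moreover have "(\<Sum>y\<in>K. g x y) = (\<Sum>y\<in>K. real (degree E x) - 2)" using dx unfolding g_def K_def by (intro sum.cong) auto
    ultimately show ?thesis using sp[of "g x"] unfolding l_def k_def by (simp add: mult.commute)
  qed
  have "2 * irr_t V E = (\<Sum>x\<in>V. \<Sum>y\<in>V. g x y)" unfolding irr_t_def g_def by simp
  also have "\<dots> = (\<Sum>x\<in>L. \<Sum>y\<in>V. g x y) + (\<Sum>x\<in>K. \<Sum>y\<in>V. g x y) + (\<Sum>x\<in>M. \<Sum>y\<in>V. g x y)" by (rule sp)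
  also have "(\<Sum>x\<in>L. \<Sum>y\<in>V. g x y) = l * (k + (S - m))" using rowL unfolding l_def by simp
  also have "(\<Sum>x\<in>K. \<Sum>y\<in>V. g x y) = k * (l + (S - 2*m))" using rowK unfolding k_def by simp
  also have "(\<Sum>x\<in>M. \<Sum>y\<in>V. g x y) = (\<Sum>x\<in>M. l * (real (degree E x) - 1) + k * (real (degree E x) - 2) + (\<Sum>y\<in>M. g x y))"
    using rowM by simp
  also have "\<dots> = l * (S - m) + k * (S - 2*m) + (\<Sum>x\<in>M. \<Sum>y\<in>M. g x y)"
    using SM unfolding m_def by (simp add: sum.distrib sum_subtractf sum_distrib_left[symmetric] algebra_simps)
  finally show ?thesis unfolding l_def k_def m_def S_def g_def by (simp add: algebra_simps)
qed



lemma all3: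
  assumes "finite M" "\<forall>v\<in>M. (3::nat) \<le> d v" "(\<Sum>v\<in>M. d v) = 3 * card M"
  shows "\<forall>v\<in>M. d v = 3"
proof -
  have "(\<Sum>v\<in>M. d v) = (\<Sum>v\<in>M. (d v - 3) + 3)" using assms(2) by (intro sum.cong) auto
  also have "\<dots> = (\<Sum>v\<in>M. d v - 3) + 3 * card M" by (simp add: sum.distrib)
  finally have "(\<Sum>v\<in>M. d v - 3) = 0" using assms(3) by simp
  then show ?thesis using assms(1,2) by (simp add: sum_eq_0_iff) (metis le_antisym diff_is_0_eq)
qed

lemma seq_eq:
  assumes fV: "finite V" and rng: "\<forall>v\<in>V. 1 \<le> degree E v \<and> degree E v \<le> 3"
    and a: "card {v\<in>V. degree E v = 1} = a" and b: "card {v\<in>V. degree E v = 2} = b"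
    and c: "card {v\<in>V. degree E v = 3} = c"
  shows "degree_seq V E = replicate_mset c 3 + replicate_mset b 2 + replicate_mset a 1"
proof (rule multiset_eqI)
  fix t
  show "count (degree_seq V E) t = count (replicate_mset c 3 + replicate_mset b 2 + replicate_mset a 1) t"
  proof (cases "t \<in> {1,2,3}")
    case True
    then show ?thesis using a b c count_dseq[OF fV, of E t] by auto
  next
    case False
    have "{v\<in>V. degree E v = t} = {}" using False rng by force
    then have "card {v\<in>V. degree E v = t} = 0" by (simp only: card.empty)
    then show ?thesis using False count_dseq[OF fV, of E t] by auto
  qed
qed



theorem theorem7:
  fixes V :: "'a set" and E :: "'a set set" and n :: nat
  assumes "n \<ge> 6"
    and "is_tree V E"
    and "card V = n"
    and "\<not> isomorphic_to_path V E n"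
    and "degree_seq V E \<noteq> {#3#} + replicate_mset (n - 4) 2 + replicate_mset 3 1"
  shows "irr_t V E \<ge> 6 * real n - 20 \<and>
    (irr_t V E = 6 * real n - 20 \<longleftrightarrow>
       degree_seq V E = replicate_mset 2 3 + replicate_mset (n - 6) 2 + replicate_mset 4 1)"
proof -
  note tree = assms(2)
  have sg: "simple_graph V E" using tree tree_sg by blast
  have fV: "finite V" using sg_finV[OF sg] .
  have fE: "finite E" using sg_finE[OF sg] .
  have dpos: "\<forall>v\<in>V. degree E v \<ge> 1"
  proof
    fix v assume v: "v \<in> V"
    have "\<exists>y\<in>V. y \<noteq> v"
    proof (rule ccontr)
      assume "\<not> (\<exists>y\<in>V. y \<noteq> v)"
      then have "V = {v}" using v by blast
      then show False using assms(1,3) by simp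
    qed
    then obtain y where y: "y \<in> V" "y \<noteq> v" by blast
    obtain w where vw: "adj E v w" using conn_nbr[OF tree_connected[OF tree] v y(1) y(2)] by blast
    then have "{v,w} \<in> {e\<in>E. v\<in>e}" unfolding adj_def by simp
    then have "{e\<in>E. v\<in>e} \<noteq> {}" by blast
    moreover have "finite {e\<in>E. v\<in>e}" using fE by simp
    ultimately show "degree E v \<ge> 1" unfolding degree_def by (simp add: Suc_le_eq card_gt_0_iff)
  qed
  define L where "L = {v\<in>V. degree E v = 1}"
  define K where "K = {v\<in>V. degree E v = 2}"
  define M where "M = {v\<in>V. 3 \<le> degree E v}"
  define l where "l = card L"
  define k where "k = card K"
  define m where "m = card M"
  define S where "S = (\<Sum>v\<in>M. degree E v)"
  define MM where "MM = (\<Sum>x\<in>M. \<Sum>y\<in>M. \<bar>real (degree E x) - real (degree E y)\<bar>)"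
  have fM: "finite L" "finite K" "finite M" using fV unfolding L_def K_def M_def by auto
  have irr: "2 * irr_t V E = 2 * (real l * real k + real l * (real S - real m) + real k * (real S - 2 * real m)) + MM"
    using irr_formula[OF fV dpos] unfolding l_def k_def m_def S_def MM_def L_def K_def M_def .
  have MM0: "MM \<ge> 0" unfolding MM_def by (intro sum_nonneg) auto
  have sumd: "(\<Sum>v\<in>V. real (degree E v)) = real l + 2 * real k + real S"
    using split3[OF fV dpos, of "\<lambda>v. real (degree E v)"]
    unfolding l_def k_def S_def L_def K_def M_def by simp
  have hs: "(\<Sum>v\<in>V. degree E v) = 2 * (n - 1)" using handshake[OF sg] tree_card[OF tree] assms(3) by simp
  have hs': "real l + 2 * real k + real S + 2 = 2 * real n"
  proof -
    have "(\<Sum>v\<in>V. real (degree E v)) = real (\<Sum>v\<in>V. degree E v)" by simp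
    then show ?thesis using sumd hs assms(1) by simp
  qed
  have hn: "n = l + k + m"
  proof -
    have "V = L \<union> (K \<union> M)" using dpos unfolding L_def K_def M_def by force
    moreover have "card (L \<union> (K \<union> M)) = l + (k + m)"
      unfolding l_def k_def m_def using fM
      by (subst card_Un_disjoint, simp, simp, (auto simp: L_def K_def M_def)[1])
         (subst card_Un_disjoint, simp_all, auto simp: K_def M_def)
    ultimately show ?thesis using assms(3) by simp
  qed
  have S3: "S \<ge> 3 * m"
  proof -
    have "(\<Sum>v\<in>M. 3) \<le> S" unfolding S_def M_def by (intro sum_mono) auto
    then show ?thesis unfolding m_def by simp
  qed
  have m1: "m \<ge> 1"
  proof (rule ccontr)
    assume "\<not> m \<ge> 1"
    then have "card M = 0" unfolding m_def by linarith
    then have "M = {}" using fM by simp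
    then have "\<forall>v\<in>V. degree E v \<le> 2" unfolding M_def by force
    then show False using path_iso[OF tree _ assms(3)] assms(4) by blast
  qed
  have all3: "\<forall>v\<in>M. degree E v = 3" if "S = 3 * m"
    using all3[OF fM(3), of "degree E"] that unfolding S_def m_def M_def by simp
  have MMz: "MM = 0" if "S = 3 * m"
    unfolding MM_def using all3[OF that] by simp
  have Mdeg3: "M = {v\<in>V. degree E v = 3}" if "S = 3 * m"
    using all3[OF that] unfolding M_def by force
  have seqM: "degree_seq V E = replicate_mset m 3 + replicate_mset k 2 + replicate_mset l 1" if "S = 3 * m"
  proof (rule seq_eq[OF fV])
    show "\<forall>v\<in>V. 1 \<le> degree E v \<and> degree E v \<le> 3"
      using dpos all3[OF that] unfolding M_def by (metis (mono_tags, lifting) mem_Collect_eq not_le_imp_less less_imp_le)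
    show "card {v\<in>V. degree E v = 1} = l" unfolding l_def L_def ..
    show "card {v\<in>V. degree E v = 2} = k" unfolding k_def K_def ..
    show "card {v\<in>V. degree E v = 3} = m" unfolding m_def using Mdeg3[OF that] by simp
  qed
  have excl: "\<not> (m = 1 \<and> S = 3)"
  proof
    assume a: "m = 1 \<and> S = 3"
    then have "l = 3" "k = n - 4" using hs' hn by linarith+
    then have "degree_seq V E = {#3#} + replicate_mset (n - 4) 2 + replicate_mset 3 1"
      using seqM a by simp
    then show False using assms(5) by blast
  qed
  have A: "int l * int k + int l * (int S - int m) + int k * (int S - 2 * int m) \<ge> 6 * int n - 20 \<and>
      (int l * int k + int l * (int S - int m) + int k * (int S - 2 * int m) \<le> 6 * int n - 20 \<longrightarrow> int m = 2 \<and> int S = 6)"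
  proof (rule arith_main)
    have "real (l + 2*k + S + 2) = real (2*n)" using hs' by simp
    then have "l + 2*k + S + 2 = 2*n" by (simp only: of_nat_eq_iff)
    then show "int l + 2 * int k + int S + 2 = 2 * int n" by simp
    show "int n = int l + int k + int m" using hn by simp
    show "3 * int m \<le> int S" using S3 by simp
    show "1 \<le> int m" using m1 by simp
    show "\<not> (int m = 1 \<and> int S = 3)" using excl by simp
    show "6 \<le> int n" using assms(1) by simp
  qed simp_all
  define F where "F = real l * real k + real l * (real S - real m) + real k * (real S - 2 * real m)"
  have FI: "F = real_of_int (int l * int k + int l * (int S - int m) + int k * (int S - 2 * int m))"
    unfolding F_def by simp
  have A1: "F \<ge> 6 * real n - 20" using A FI by linarith
  have A2: "F \<le> 6 * real n - 20 \<Longrightarrow> m = 2 \<and> S = 6"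
  proof -
    assume "F \<le> 6 * real n - 20"
    then have "int l * int k + int l * (int S - int m) + int k * (int S - 2 * int m) \<le> 6 * int n - 20"
      using FI by linarith
    then show "m = 2 \<and> S = 6" using A by simp
  qed
  have irrF: "irr_t V E = F + MM / 2" using irr unfolding F_def by simp
  have G1: "irr_t V E \<ge> 6 * real n - 20" using irrF A1 MM0 by simp
  have G2: "irr_t V E = 6 * real n - 20 \<longleftrightarrow>
       degree_seq V E = replicate_mset 2 3 + replicate_mset (n - 6) 2 + replicate_mset 4 1"
  proof
    assume "irr_t V E = 6 * real n - 20"
    then have "F \<le> 6 * real n - 20" using irrF MM0 by simp
    then have ms: "m = 2 \<and> S = 6" using A2 by blast
    then have "l = 4" "k = n - 6" using hs' hn by linarith+
    then show "degree_seq V E = replicate_mset 2 3 + replicate_mset (n - 6) 2 + replicate_mset 4 1"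
      using seqM ms by simp
  next
    assume ds: "degree_seq V E = replicate_mset 2 3 + replicate_mset (n - 6) 2 + replicate_mset 4 1"
    have cnt: "card {v\<in>V. degree E v = t} = count (replicate_mset 2 3 + replicate_mset (n - 6) 2 + replicate_mset 4 1) t" for t
      using count_dseq[OF fV, of E t] ds by simp
    have M3: "M = {v\<in>V. degree E v = 3}"
    proof (rule ccontr)
      assume "M \<noteq> {v\<in>V. degree E v = 3}"
      then obtain v where v: "v \<in> V" "degree E v \<ge> 4" unfolding M_def by force
      have "v \<in> {w\<in>V. degree E w = degree E v}" using v by simp
      then have "card {w\<in>V. degree E w = degree E v} \<noteq> 0" using fV by auto
      then show False using cnt[of "degree E v"] v(2) by simp
    qed
    then have m2: "m = 2" and S6: "S = 6"
    proof -
      show m2: "m = 2" unfolding m_def using M3 cnt[of 3] by simp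
      have "S = (\<Sum>v\<in>M. 3)" unfolding S_def using M3 by simp
      then show "S = 6" using m2 unfolding m_def by simp
    qed
    have l4: "l = 4" unfolding l_def L_def using cnt[of 1] by simp
    have k6: "k = n - 6" unfolding k_def K_def using cnt[of 2] by simp
    have "MM = 0" using MMz m2 S6 by simp
    moreover have "F = 6 * real n - 20" unfolding F_def using m2 S6 l4 k6 assms(1) by (simp add: algebra_simps)
    ultimately show "irr_t V E = 6 * real n - 20" using irrF by simp
  qed
  show ?thesis using G1 G2 by blast
qed

end
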